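(* Let $n\ge2$, $a\in\{-1,0,1\}$, $b,d\in\{1,-1\}$, $C,H\in\mathbb{R}$, and $f(v)=C-dv^2\big(a+b(H+v^{-n})^2\big)$ for $v>0$. Let $g:\mathbb{R}\to(0,\infty)$ be a non-constant smooth function with $(g')^2=f(g)$ and $g''=\tfrac12 f'(g)$ on $\mathbb{R}$. Then $g$ is of one of the types 1–5 defined in the context.
   Context: Types of a non-constant positive solution $g:\mathbb{R}\to(0,\infty)$: type 1 (periodic): $g$ is periodic with range $[v_1,v_2]$, $0<v_1<v_2$, and its maximum and minimum are each attained infinitely many times; type 2 (unbounded with no minimum): $g$ is injective with range $(v_1,\infty)$ for some $v_1>0$; type 3 (unbounded with a minimum): range $[v_1,\infty)$, $v_1$ attained exactly once and every other value of the range attained exactly twice; type 4 (bounded, not periodic, with a minimum): range $[v_1,v_2)$, $v_1$ attained exactly once, every other value exactly twice; type 5 (bounded, not periodic, with a maximum): range $(v_1,v_2]$, $v_2$ attained exactly once, every other value exactly twice. *)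

theory Defs
  imports "HOL-Analysis.Analysis"
begin

definition fpot :: "nat \<Rightarrow> real \<Rightarrow> real \<Rightarrow> real \<Rightarrow> real \<Rightarrow> real \<Rightarrow> real \<Rightarrow> real" where
  "fpot n a b d C H v = C - d * v^2 * (a + b * (H + inverse (v ^ n))^2)"

definition smooth_fun :: "(real \<Rightarrow> real) \<Rightarrow> bool" where
  "smooth_fun g \<longleftrightarrow> (\<exists>D :: nat \<Rightarrow> real \<Rightarrow> real. D 0 = g \<and>
      (\<forall>k x. (D k has_real_derivative D (Suc k) x) (at x)))"

definition type1 :: "(real \<Rightarrow> real) \<Rightarrow> bool" where
  "type1 g \<longleftrightarrow> (\<exists>T>0. \<forall>x. g (x + T) = g x) \<and>
     (\<exists>v1 v2. 0 < v1 \<and> v1 < v2 \<and> range g = {v1..v2} \<and>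
        infinite (g -` {v1}) \<and> infinite (g -` {v2}))"

definition type2 :: "(real \<Rightarrow> real) \<Rightarrow> bool" where
  "type2 g \<longleftrightarrow> inj g \<and> (\<exists>v1>0. range g = {v1<..})"

definition type3 :: "(real \<Rightarrow> real) \<Rightarrow> bool" where
  "type3 g \<longleftrightarrow> (\<exists>v1. range g = {v1..} \<and> card (g -` {v1}) = 1 \<and>
     (\<forall>y \<in> range g - {v1}. card (g -` {y}) = 2))"

definition type4 :: "(real \<Rightarrow> real) \<Rightarrow> bool" where
  "type4 g \<longleftrightarrow> \<not> (\<exists>T>0. \<forall>x. g (x + T) = g x) \<and>
     (\<exists>v1 v2. range g = {v1..<v2} \<and> card (g -` {v1}) = 1 \<and>
     (\<forall>y \<in> range g - {v1}. card (g -` {y}) = 2))"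

definition type5 :: "(real \<Rightarrow> real) \<Rightarrow> bool" where
  "type5 g \<longleftrightarrow> \<not> (\<exists>T>0. \<forall>x. g (x + T) = g x) \<and>
     (\<exists>v1 v2. range g = {v1<..v2} \<and> card (g -` {v2}) = 1 \<and>
     (\<forall>y \<in> range g - {v2}. card (g -` {y}) = 2))"

end

theory Submission
  imports Defs
begin
definition ip :: "nat \<Rightarrow> real \<Rightarrow> real" where "ip k v = inverse (v^k)"

lemma ip_deriv: "v \<noteq> 0 \<Longrightarrow> (ip k has_real_derivative (- real k * ip (Suc k) v)) (at v)"
  unfolding ip_def
  apply (rule derivative_eq_intros refl | simp)+
  apply (cases k) apply (auto simp: field_simps)
  done

definition FF :: "nat \<Rightarrow> real \<Rightarrow> real \<Rightarrow> real \<Rightarrow> real \<Rightarrow> real \<Rightarrow> real \<Rightarrow> real" where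
  "FF n a b d C H v = C - d*(a+b*H^2) * v^2 - 2*d*b*H * ip (n-2) v - d*b* ip (2*n-2) v"

lemma fpot_eq: assumes "n \<ge> 2" "v > 0" shows "fpot n a b d C H v = FF n a b d C H v"
proof -
  obtain k where k: "n = k + 2" using assms(1) by (metis add.commute le_Suc_ex)
  have e1: "2*n-2 = 2*k+2" using k by simp
  have p: "v^n = v^k * v^2" "v^(2*k+2) = (v^k)^2 * v^2" using k by (simp_all add: power_add power_mult power2_eq_square mult_ac)
  have vk: "v^k > 0" using assms by simp
  have "v^2 * (H + inverse (v^n))^2 = H^2 * v^2 + 2*H*inverse (v^k) + inverse (v^(2*k+2))"
    unfolding p using assms(2) vk by (simp add: field_simps power2_eq_square)
  then show ?thesis unfolding fpot_def FF_def ip_def using k e1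
    by (simp add: algebra_simps)
qed

definition FP :: "nat \<Rightarrow> real \<Rightarrow> real \<Rightarrow> real \<Rightarrow> real \<Rightarrow> real \<Rightarrow> real \<Rightarrow> real" where
  "FP n a b d C H v = -2*d*(a+b*H^2) * v + 2*d*b*H*(real n - 2) * ip (n-1) v + d*b*(2*real n - 2) * ip (2*n-1) v"

lemma FF_deriv: assumes "n \<ge> 2" "v > 0" shows "(FF n a b d C H has_real_derivative FP n a b d C H v) (at v)"
proof -
  have s1: "Suc (n-2) = n-1" "Suc (2*n-2) = 2*n-1" using assms(1) by auto
  have r: "real (n-2) = real n - 2" "real (2*n-2) = 2*real n - 2" using assms(1) by auto
  have v: "v \<noteq> 0" using assms by simp
  show ?thesis unfolding FF_def FP_def
    apply (rule derivative_eq_intros ip_deriv[OF v] refl)+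
    using s1 r by (simp add: algebra_simps)
qed

lemma fpot_deriv: assumes "n \<ge> 2" "v > 0" shows "(fpot n a b d C H has_real_derivative FP n a b d C H v) (at v)"
  by (rule has_field_derivative_transform_within_open[OF FF_deriv[OF assms], of "{0<..}"])
     (use assms fpot_eq in auto)

lemma ip_lip: assumes "a0 > 0" "a0 \<le> u" "a0 \<le> v"
  shows "\<bar>ip k u - ip k v\<bar> \<le> real k * ip (Suc k) a0 * \<bar>u - v\<bar>"
proof -
  have main: "\<bar>ip k u - ip k v\<bar> \<le> real k * ip (Suc k) a0 * \<bar>u - v\<bar>" if "a0 \<le> u" "u < v" for u v
  proof -
    have der: "\<And>x. u \<le> x \<Longrightarrow> x \<le> v \<Longrightarrow> (ip k has_real_derivative (- real k * ip (Suc k) x)) (at x)"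
      using ip_deriv that assms(1) by simp
    obtain z where z: "u < z" "z < v" "ip k v - ip k u = (v - u) * (- real k * ip (Suc k) z)"
      using MVT2[OF \<open>u < v\<close> der] by blast
    have z0: "a0 \<le> z" using z that by simp
    have "a0 ^ Suc k \<le> z ^ Suc k" using z0 assms(1) by (intro power_mono) auto
    then have i1: "ip (Suc k) z \<le> ip (Suc k) a0" unfolding ip_def
      using assms(1) by (intro le_imp_inverse_le) auto
    have i0: "ip (Suc k) z \<ge> 0" unfolding ip_def using z0 assms(1) by simp
    have e: "ip k u - ip k v = (v - u) * (real k * ip (Suc k) z)" using z(3) by linarith
    have "(v - u) * (real k * ip (Suc k) z) \<ge> 0" using that i0 by simp
    then have "\<bar>ip k u - ip k v\<bar> = (v - u) * (real k * ip (Suc k) z)" unfolding e by simp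
    also have "\<dots> \<le> (v - u) * (real k * ip (Suc k) a0)"
      using that i1 by (intro mult_left_mono) auto
    finally show ?thesis using that by (simp add: mult.commute)
  qed
  show ?thesis
  proof (cases u v rule: linorder_cases)
    case less then show ?thesis using main assms by blast
  next
    case equal then show ?thesis by simp
  next
    case greater then show ?thesis using main[of v u] assms by (simp add: abs_minus_commute)
  qed
qed

lemma FP_lip: assumes "a0 > 0"
  shows "\<exists>L. \<forall>u v. a0 \<le> u \<longrightarrow> a0 \<le> v \<longrightarrow> \<bar>FP n a b d C H u - FP n a b d C H v\<bar> \<le> L * \<bar>u - v\<bar>"
proof -
  define c1 where "c1 = -2*d*(a+b*H^2)"
  define c2 where "c2 = 2*d*b*H*(real n - 2)"
  define c3 where "c3 = d*b*(2*real n - 2)"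
  define L1 where "L1 = real (n-1) * ip (Suc (n-1)) a0"
  define L2 where "L2 = real (2*n-1) * ip (Suc (2*n-1)) a0"
  show ?thesis
  proof (intro exI allI impI)
    fix u v assume uv: "a0 \<le> u" "a0 \<le> v"
    have "FP n a b d C H u - FP n a b d C H v = c1*(u-v) + c2*(ip (n-1) u - ip (n-1) v) + c3*(ip (2*n-1) u - ip (2*n-1) v)"
      unfolding FP_def c1_def c2_def c3_def by (simp add: algebra_simps)
    also have "\<bar>\<dots>\<bar> \<le> \<bar>c1\<bar>*\<bar>u-v\<bar> + \<bar>c2\<bar>*(L1*\<bar>u-v\<bar>) + \<bar>c3\<bar>*(L2*\<bar>u-v\<bar>)"
    proof -
      have "\<bar>ip (n-1) u - ip (n-1) v\<bar> \<le> L1*\<bar>u-v\<bar>" unfolding L1_def using ip_lip assms uv by blast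
      moreover have "\<bar>ip (2*n-1) u - ip (2*n-1) v\<bar> \<le> L2*\<bar>u-v\<bar>" unfolding L2_def using ip_lip assms uv by blast
      ultimately have "\<bar>c2\<bar>*\<bar>ip (n-1) u - ip (n-1) v\<bar> \<le> \<bar>c2\<bar>*(L1*\<bar>u-v\<bar>)"
        "\<bar>c3\<bar>*\<bar>ip (2*n-1) u - ip (2*n-1) v\<bar> \<le> \<bar>c3\<bar>*(L2*\<bar>u-v\<bar>)"
        by (simp_all add: mult_left_mono)
      moreover have "\<bar>c1*(u-v) + c2*(ip (n-1) u - ip (n-1) v) + c3*(ip (2*n-1) u - ip (2*n-1) v)\<bar>
         \<le> \<bar>c1\<bar>*\<bar>u-v\<bar> + \<bar>c2\<bar>*\<bar>ip (n-1) u - ip (n-1) v\<bar> + \<bar>c3\<bar>*\<bar>ip (2*n-1) u - ip (2*n-1) v\<bar>"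
      proof -
        define X where "X = u - v"
        define Y where "Y = ip (n-1) u - ip (n-1) v"
        define Z where "Z = ip (2*n-1) u - ip (2*n-1) v"
        have "\<bar>c1*X + c2*Y + c3*Z\<bar> \<le> \<bar>c1*X\<bar> + \<bar>c2*Y\<bar> + \<bar>c3*Z\<bar>" by linarith
        then show ?thesis unfolding X_def[symmetric] Y_def[symmetric] Z_def[symmetric] by (simp add: abs_mult)
      qed
      ultimately show ?thesis by linarith
    qed
    finally show "\<bar>FP n a b d C H u - FP n a b d C H v\<bar> \<le> (\<bar>c1\<bar> + \<bar>c2\<bar>*L1 + \<bar>c3\<bar>*L2) * \<bar>u - v\<bar>"
      by (simp add: algebra_simps)
  qed
qed

lemma gronwall_right:
  fixes E E' :: "real \<Rightarrow> real"
  assumes "x1 \<le> x" "\<And>t. x1 \<le> t \<Longrightarrow> t \<le> x \<Longrightarrow> (E has_real_derivative E' t) (at t)"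
    "\<And>t. x1 \<le> t \<Longrightarrow> t \<le> x \<Longrightarrow> E' t \<le> K * E t" "E x1 = 0" "\<And>t. E t \<ge> 0"
  shows "E x = 0"
proof -
  have "E x * exp (-K*x) \<le> E x1 * exp (-K*x1)"
  proof (rule DERIV_nonpos_imp_nonincreasing[OF assms(1)])
    fix t assume t: "x1 \<le> t" "t \<le> x"
    have "((\<lambda>t. E t * exp (-K*t)) has_real_derivative ((E' t - K*E t) * exp (-K*t))) (at t)"
      by (rule derivative_eq_intros assms(2)[OF t] refl)+ (simp add: algebra_simps)
    moreover have "(E' t - K*E t) * exp (-K*t) \<le> 0" using assms(3)[OF t] by (simp add: mult_le_0_iff)
    ultimately show "\<exists>y. ((\<lambda>t. E t * exp (-K*t)) has_real_derivative y) (at t) \<and> y \<le> 0" by blast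
  qed
  then have "E x * exp (-K*x) \<le> 0" using assms(4) by simp
  then have "E x \<le> 0" by (simp add: mult_le_0_iff)
  then show ?thesis using assms(5)[of x] by simp
qed

lemma gronwall_left:
  fixes E E' :: "real \<Rightarrow> real"
  assumes "x \<le> x1" "\<And>t. x \<le> t \<Longrightarrow> t \<le> x1 \<Longrightarrow> (E has_real_derivative E' t) (at t)"
    "\<And>t. x \<le> t \<Longrightarrow> t \<le> x1 \<Longrightarrow> - E' t \<le> K * E t" "E x1 = 0" "\<And>t. E t \<ge> 0"
  shows "E x = 0"
proof -
  have "E x * exp (K*x) \<le> E x1 * exp (K*x1)"
  proof (rule DERIV_nonneg_imp_nondecreasing[OF assms(1)])
    fix t assume t: "x \<le> t" "t \<le> x1"
    have "((\<lambda>t. E t * exp (K*t)) has_real_derivative ((E' t + K*E t) * exp (K*t))) (at t)"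
      by (rule derivative_eq_intros assms(2)[OF t] refl)+ (simp add: algebra_simps)
    moreover have "(E' t + K*E t) * exp (K*t) \<ge> 0" using assms(3)[OF t] by simp
    ultimately show "\<exists>y. ((\<lambda>t. E t * exp (K*t)) has_real_derivative y) (at t) \<and> y \<ge> 0" by blast
  qed
  then have "E x * exp (K*x) \<le> 0" using assms(4) by simp
  then have "E x \<le> 0" by (simp add: mult_le_0_iff)
  then show ?thesis using assms(5)[of x] by simp
qed

lemma cont_pos_nbhd:
  fixes f :: "real \<Rightarrow> real"
  assumes "isCont f x" "f x > c"
  shows "\<exists>d>0. \<forall>y. \<bar>y - x\<bar> < d \<longrightarrow> f y > c"
proof -
  obtain s where s: "s > 0" "\<And>y. y \<noteq> x \<and> norm (y - x) < s \<Longrightarrow> norm (f y - f x) < f x - c"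
    using LIM_D[OF assms(1)[unfolded isCont_def], of "f x - c"] assms(2) by auto
  show ?thesis
  proof (intro exI conjI allI impI)
    fix y assume "\<bar>y - x\<bar> < s"
    then show "f y > c" using s(2)[of y] assms(2) by (cases "y = x") auto
  qed (use s in auto)
qed

lemma ode_unique:
  fixes \<phi> ya ya' yb yb' :: "real \<Rightarrow> real"
  assumes lip: "\<And>a0. a0 > 0 \<Longrightarrow> \<exists>L. \<forall>u v. a0 \<le> u \<longrightarrow> a0 \<le> v \<longrightarrow> \<bar>\<phi> u - \<phi> v\<bar> \<le> L * \<bar>u - v\<bar>"
    and p1: "\<And>x. ya x > 0" "\<And>x. (ya has_real_derivative ya' x) (at x)" "\<And>x. (ya' has_real_derivative \<phi> (ya x)) (at x)"
    and p2: "\<And>x. yb x > 0" "\<And>x. (yb has_real_derivative yb' x) (at x)" "\<And>x. (yb' has_real_derivative \<phi> (yb x)) (at x)"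
    and i: "ya xs = yb xs" "ya' xs = yb' xs"
  shows "ya x = yb x \<and> ya' x = yb' x"
proof -
  define S where "S = {x. ya x = yb x \<and> ya' x = yb' x}"
  have c1: "continuous_on UNIV ya" "continuous_on UNIV yb" "continuous_on UNIV ya'" "continuous_on UNIV yb'"
    using p1 p2 by (auto intro!: continuous_at_imp_continuous_on DERIV_isCont)
  have "closed S" unfolding S_def
    by (intro closed_Collect_conj closed_Collect_eq c1)
  have loc: "\<exists>e>0. \<forall>x. \<bar>x - x1\<bar> < e \<longrightarrow> x \<in> S" if "x1 \<in> S" for x1
  proof -
    define v where "v = ya x1"
    have v: "v > 0" using p1 v_def by auto
    obtain d1 where d1: "d1 > 0" "\<And>y. \<bar>y - x1\<bar> < d1 \<Longrightarrow> ya y > v/2"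
      using cont_pos_nbhd[where f=ya and x=x1 and c="v/2"] v v_def DERIV_isCont[OF p1(2)] by auto
    have v2: "yb x1 = v" using that v_def unfolding S_def by simp
    obtain d2 where d2: "d2 > 0" "\<And>y. \<bar>y - x1\<bar> < d2 \<Longrightarrow> yb y > v/2"
      using cont_pos_nbhd[where f=yb and x=x1 and c="v/2"] v v2 DERIV_isCont[OF p2(2)] by auto
    obtain L where L: "\<And>u w. v/2 \<le> u \<Longrightarrow> v/2 \<le> w \<Longrightarrow> \<bar>\<phi> u - \<phi> w\<bar> \<le> L * \<bar>u - w\<bar>"
      using lip[of "v/2"] v by auto
    define K where "K = 1 + \<bar>L\<bar>"
    define E where "E t = (ya t - yb t)^2 + (ya' t - yb' t)^2" for t
    define E' where "E' t = 2*(ya t - yb t)*(ya' t - yb' t) + 2*(ya' t - yb' t)*(\<phi> (ya t) - \<phi> (yb t))" for t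
    have dE: "(E has_real_derivative E' t) (at t)" for t
      unfolding E_def E'_def
      by (rule derivative_eq_intros p1 p2 refl)+ (simp add: algebra_simps)
    have E0: "E t \<ge> 0" for t unfolding E_def by simp
    have Ex1: "E x1 = 0" using that unfolding S_def E_def by simp
    have bnd: "\<bar>E' t\<bar> \<le> K * E t" if "\<bar>t - x1\<bar> < min d1 d2" for t
    proof -
      define p where "p = ya t - yb t"
      define q where "q = ya' t - yb' t"
      have l0: "\<bar>\<phi> (ya t) - \<phi> (yb t)\<bar> \<le> L * \<bar>p\<bar>"
        using L[of "ya t" "yb t"] d1(2)[of t] d2(2)[of t] that unfolding p_def by simp
      have "L * \<bar>p\<bar> \<le> \<bar>L\<bar> * \<bar>p\<bar>" by (rule mult_right_mono) auto
      with l0 have l: "\<bar>\<phi> (ya t) - \<phi> (yb t)\<bar> \<le> \<bar>L\<bar> * \<bar>p\<bar>" by linarith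
      have e: "E' t = 2*p*q + 2*q*(\<phi> (ya t) - \<phi> (yb t))" by (simp add: E'_def p_def q_def)
      have t2: "\<bar>2*q*(\<phi> (ya t) - \<phi> (yb t))\<bar> \<le> 2*\<bar>q\<bar>*(\<bar>L\<bar>*\<bar>p\<bar>)"
        using l by (simp add: abs_mult mult_left_mono)
      have t1: "\<bar>2*p*q\<bar> = 2*\<bar>p\<bar>*\<bar>q\<bar>" by (simp add: abs_mult)
      have "\<bar>E' t\<bar> \<le> 2*\<bar>p\<bar>*\<bar>q\<bar> + 2*\<bar>q\<bar>*(\<bar>L\<bar>*\<bar>p\<bar>)"
        unfolding e using abs_triangle_ineq[of "2*p*q" "2*q*(\<phi> (ya t) - \<phi> (yb t))"] t1 t2 by linarith
      also have "\<dots> \<le> (1 + \<bar>L\<bar>) * (p^2 + q^2)"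
      proof -
        have s: "2*\<bar>p\<bar>*\<bar>q\<bar> \<le> p^2 + q^2" using sum_squares_bound[of "\<bar>p\<bar>" "\<bar>q\<bar>"] by simp
        have "2*\<bar>q\<bar>*(\<bar>L\<bar>*\<bar>p\<bar>) = \<bar>L\<bar> * (2*\<bar>p\<bar>*\<bar>q\<bar>)" by (simp add: algebra_simps)
        also have "\<dots> \<le> \<bar>L\<bar> * (p^2 + q^2)" by (rule mult_left_mono[OF s]) simp
        finally show ?thesis using s by (simp add: distrib_right)
      qed
      finally show ?thesis unfolding K_def E_def p_def q_def .
    qed
    show ?thesis
    proof (intro exI[of _ "min d1 d2"] conjI allI impI)
      show "min d1 d2 > 0" using d1 d2 by simp
      fix x assume x: "\<bar>x - x1\<bar> < min d1 d2"
      have "E x = 0"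
      proof (cases "x1 \<le> x")
        case True
        show ?thesis
        proof (rule gronwall_right[where K=K, OF True dE _ Ex1 E0])
          fix t assume "x1 \<le> t" "t \<le> x"
          then have "\<bar>t - x1\<bar> < min d1 d2" using x by auto
          then show "E' t \<le> K * E t" using bnd[of t] by linarith
        qed
      next
        case False
        show ?thesis
        proof (rule gronwall_left[where K=K, OF _ dE _ Ex1 E0])
          show "x \<le> x1" using False by simp
          fix t assume "x \<le> t" "t \<le> x1"
          then have "\<bar>t - x1\<bar> < min d1 d2" using x by auto
          then show "- E' t \<le> K * E t" using bnd[of t] by linarith
        qed
      qed
      then show "x \<in> S" unfolding E_def S_def
        by (simp add: add_nonneg_eq_0_iff)
    qed
  qed
  have "open S"
    unfolding open_dist
    using loc by (metis dist_real_def)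
  have "xs \<in> S" using i S_def by auto
  have "S = UNIV"
  proof (rule ccontr)
    assume "S \<noteq> UNIV"
    have "S \<inter> UNIV = {} \<or> (-S) \<inter> UNIV = {}"
      using connectedD[OF connected_UNIV \<open>open S\<close>, of "-S"] \<open>closed S\<close> by auto
    then show False using \<open>xs \<in> S\<close> \<open>S \<noteq> UNIV\<close> by auto
  qed
  then show ?thesis unfolding S_def by auto
qed

definition sol :: "nat \<Rightarrow> real \<Rightarrow> real \<Rightarrow> real \<Rightarrow> real \<Rightarrow> real \<Rightarrow> (real \<Rightarrow> real) \<Rightarrow> (real \<Rightarrow> real) \<Rightarrow> (real \<Rightarrow> real) \<Rightarrow> bool" where
  "sol n a b d C H g g' g'' \<longleftrightarrow> (\<forall>x. g x > 0) \<and> (\<forall>x. (g has_real_derivative g' x) (at x)) \<and>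
     (\<forall>x. (g' has_real_derivative g'' x) (at x)) \<and> (\<forall>x. (g' x)^2 = FF n a b d C H (g x)) \<and>
     (\<forall>x. g'' x = FP n a b d C H (g x) / 2)"

lemma solD:
  assumes "sol n a b d C H g g' g''"
  shows "\<And>x. g x > 0" "\<And>x. (g has_real_derivative g' x) (at x)"
    "\<And>x. (g' has_real_derivative g'' x) (at x)" "\<And>x. (g' x)^2 = FF n a b d C H (g x)"
    "\<And>x. g'' x = FP n a b d C H (g x) / 2"
  using assms unfolding sol_def by blast+

lemma solD2:
  assumes "sol n a b d C H g g' g''"
  shows "(g' has_real_derivative FP n a b d C H (g x) / 2) (at x)"
  unfolding solD(5)[OF assms, symmetric] by (rule solD(3)[OF assms])

lemma sol_reflect:
  assumes "sol n a b d C H g g' g''"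
  shows "sol n a b d C H (\<lambda>x. g (c - x)) (\<lambda>x. - g' (c - x)) (\<lambda>x. g'' (c - x))"
proof -
  note sd = solD[OF assms]
  have i: "((\<lambda>x. c - x) has_real_derivative -1) (at x)" for x
    by (rule derivative_eq_intros refl)+ simp
  have A: "((\<lambda>x. g (c - x)) has_real_derivative - g' (c - x)) (at x)" for x
    using DERIV_chain2[OF sd(2) i, of x] by simp
  have B: "((\<lambda>x. - g' (c - x)) has_real_derivative g'' (c - x)) (at x)" for x
    using DERIV_minus[OF DERIV_chain2[OF sd(3) i, of x]] by simp
  have E: "(- g' (c - x))^2 = FF n a b d C H (g (c - x))" for x
    using sd(4)[of "c - x"] by simp
  show ?thesis unfolding sol_def using A B E sd(1) sd(5) by blast
qed

lemma phi_lip: assumes "a0 > 0"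
  shows "\<exists>L. \<forall>u v. a0 \<le> u \<longrightarrow> a0 \<le> v \<longrightarrow> \<bar>FP n a b d C H u / 2 - FP n a b d C H v / 2\<bar> \<le> L * \<bar>u - v\<bar>"
proof -
  obtain L where L: "\<forall>u v. a0 \<le> u \<longrightarrow> a0 \<le> v \<longrightarrow> \<bar>FP n a b d C H u - FP n a b d C H v\<bar> \<le> L * \<bar>u - v\<bar>"
    using FP_lip[OF assms] by blast
  show ?thesis
  proof (intro exI[of _ "L/2"] allI impI)
    fix u v assume "a0 \<le> u" "a0 \<le> v"
    then have "\<bar>FP n a b d C H u - FP n a b d C H v\<bar> \<le> L * \<bar>u - v\<bar>" using L by blast
    moreover have "\<bar>FP n a b d C H u / 2 - FP n a b d C H v / 2\<bar> = \<bar>FP n a b d C H u - FP n a b d C H v\<bar> / 2"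
      by (simp add: diff_divide_distrib[symmetric])
    ultimately show "\<bar>FP n a b d C H u / 2 - FP n a b d C H v / 2\<bar> \<le> L / 2 * \<bar>u - v\<bar>" by simp
  qed
qed

lemma reflect_sym:
  assumes s: "sol n a b d C H g g' g''" and z: "g' x0 = 0"
  shows "g (2*x0 - x) = g x"
proof -
  note r = sol_reflect[OF s, of "2*x0"]
  have s5: "\<And>x. g x > 0" "\<And>x. (g has_real_derivative g' x) (at x)"
     "\<And>x. (g' has_real_derivative FP n a b d C H (g x) / 2) (at x)"
    using solD[OF s] solD2[OF s] by blast+
  have r5: "\<And>x. g (2*x0 - x) > 0" "\<And>x. ((\<lambda>x. g (2*x0 - x)) has_real_derivative - g' (2*x0 - x)) (at x)"
     "\<And>x. ((\<lambda>x. - g' (2*x0 - x)) has_real_derivative FP n a b d C H (g (2*x0 - x)) / 2) (at x)"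
    using solD[OF r] solD2[OF r] by blast+
  have "g x = g (2*x0 - x) \<and> g' x = - g' (2*x0 - x)"
    by (rule ode_unique[where \<phi> = "\<lambda>v. FP n a b d C H v / 2" and ya=g and ya'=g'
         and yb="\<lambda>x. g (2*x0 - x)" and yb'="\<lambda>x. - g' (2*x0 - x)" and xs=x0, OF phi_lip s5 r5])
       (use z in auto)
  then show ?thesis by simp
qed

lemma pow_ip: assumes "v > 0" "j \<le> i" shows "v^i * ip j v = v^(i - j)"
proof -
  have "v^i = v^(i-j) * v^j" using assms(2) by (simp add: power_add[symmetric])
  then show ?thesis unfolding ip_def using assms(1) by (simp add: field_simps)
qed

definition QQ :: "nat \<Rightarrow> real \<Rightarrow> real \<Rightarrow> real \<Rightarrow> real \<Rightarrow> real \<Rightarrow> real \<Rightarrow> real" where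
  "QQ n a b d C H v = C * v ^ (2*n-2) - d * (a+b*H^2) * v ^ (2*n) - 2*d*b*H * v ^ n - d*b"

lemma QQ_eq: assumes "n \<ge> 2" "v > 0" shows "QQ n a b d C H v = v^(2*n-2) * FF n a b d C H v"
proof -
  have i: "(2*n-2) - (n-2) = n" using assms(1) by simp
  have "v^(2*n-2) * ip (n-2) v = v^((2*n-2)-(n-2))" by (rule pow_ip) (use assms in auto)
  then have e1: "v^(2*n-2) * ip (n-2) v = v^n" by (simp only: i)
  have e2: "v^(2*n-2) * ip (2*n-2) v = 1" using pow_ip[OF assms(2), of "2*n-2" "2*n-2"] by simp
  have j: "2*n = (2*n-2)+2" using assms(1) by simp
  have e3: "v^(2*n-2) * v^2 = v^(2*n)" by (subst (2) j) (simp only: power_add)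
  have "v^(2*n-2) * FF n a b d C H v = C * v ^ (2*n-2) - d*(a+b*H^2)*(v ^ (2*n-2) * v ^ 2)
     - 2*d*b*H*(v^(2*n-2) * ip (n-2) v) - d*b*(v^(2*n-2) * ip (2*n-2) v)"
    unfolding FF_def by (simp only: algebra_simps)
  then show ?thesis unfolding e1 e2 e3 QQ_def by simp
qed

lemma FP_cont: assumes "v > 0" shows "isCont (FP n a b d C H) v"
  unfolding FP_def ip_def using assms by (intro continuous_intros) auto

lemma FF_cont: assumes "n \<ge> 2" "v > 0" shows "isCont (FF n a b d C H) v"
  by (rule DERIV_isCont[OF FF_deriv[OF assms]])

lemma lim_top:
  assumes n: "n \<ge> 2" and bd: "b \<in> {-1,1}" "d \<in> {-1,1}"
    and s: "sol n a b d C H g g' g''" and lim: "(g \<longlongrightarrow> L) at_top"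
  shows "L > 0 \<and> FF n a b d C H L = 0 \<and> FP n a b d C H L = 0"
proof -
  note sd = solD[OF s]
  have L0: "L \<ge> 0"
    by (rule tendsto_lowerbound[OF lim]) (auto simp: less_imp_le sd(1))
  have "\<forall>x. \<exists>z. x < z \<and> z < x + 1 \<and> g (x+1) - g x = g' z"
  proof
    fix x :: real
    obtain z where "x < z" "z < x+1" "g (x+1) - g x = (x + 1 - x) * g' z"
      using MVT2[of x "x+1" g g'] sd(2) by force
    then show "\<exists>z. x < z \<and> z < x + 1 \<and> g (x+1) - g x = g' z" by auto
  qed
  then obtain \<xi> where xi: "\<And>x. x < \<xi> x \<and> \<xi> x < x + 1 \<and> g (x+1) - g x = g' (\<xi> x)" by metis
  have "\<forall>x. \<exists>z. x < z \<and> z < x + 1 \<and> g' (x+1) - g' x = FP n a b d C H (g z) / 2"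
  proof
    fix x :: real
    obtain z where "x < z" "z < x+1" "g' (x+1) - g' x = (x + 1 - x) * (FP n a b d C H (g z) / 2)"
      using MVT2[of x "x+1" g' "\<lambda>z. FP n a b d C H (g z) / 2"] solD2[OF s] by force
    then show "\<exists>z. x < z \<and> z < x + 1 \<and> g' (x+1) - g' x = FP n a b d C H (g z) / 2" by auto
  qed
  then obtain \<eta> where eta: "\<And>x. x < \<eta> x \<and> \<eta> x < x + 1 \<and> g' (x+1) - g' x = FP n a b d C H (g (\<eta> x)) / 2" by metis
  have top1: "filterlim (\<lambda>x::real. x + 1) at_top at_top"
    by (rule filterlim_at_top_mono[OF filterlim_ident]) auto
  have xitop: "filterlim \<xi> at_top at_top"
    by (rule filterlim_at_top_mono[OF filterlim_ident]) (auto simp: less_imp_le xi)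
  have etatop: "filterlim \<eta> at_top at_top"
    by (rule filterlim_at_top_mono[OF filterlim_ident]) (auto simp: less_imp_le eta)
  have g1: "((\<lambda>x. g (x+1)) \<longlongrightarrow> L) at_top" by (rule filterlim_compose[OF lim top1])
  have gxi: "((\<lambda>x. g (\<xi> x)) \<longlongrightarrow> L) at_top" by (rule filterlim_compose[OF lim xitop])
  have geta: "((\<lambda>x. g (\<eta> x)) \<longlongrightarrow> L) at_top" by (rule filterlim_compose[OF lim etatop])
  have "((\<lambda>x. g (x+1) - g x) \<longlongrightarrow> L - L) at_top" by (intro tendsto_intros g1 lim)
  then have dxi: "((\<lambda>x. g' (\<xi> x)) \<longlongrightarrow> 0) at_top" using xi by simp
  have "((\<lambda>x. QQ n a b d C H (g (\<xi> x))) \<longlongrightarrow> QQ n a b d C H L) at_top"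
    unfolding QQ_def by (intro tendsto_intros gxi)
  moreover have "((\<lambda>x. QQ n a b d C H (g (\<xi> x))) \<longlongrightarrow> L ^ (2*n-2) * 0^2) at_top"
  proof -
    have "((\<lambda>x. g (\<xi> x) ^ (2*n-2) * g' (\<xi> x) ^ 2) \<longlongrightarrow> L ^ (2*n-2) * 0^2) at_top"
      by (intro tendsto_intros gxi dxi)
    moreover have "QQ n a b d C H (g (\<xi> x)) = g (\<xi> x) ^ (2*n-2) * g' (\<xi> x) ^ 2" for x
      using QQ_eq[OF n sd(1)[of "\<xi> x"]] sd(4)[of "\<xi> x"] by simp
    ultimately show ?thesis by simp
  qed
  ultimately have Q0: "QQ n a b d C H L = 0"
    using tendsto_unique[OF trivial_limit_at_top_linorder] by force
  have db: "d * b \<noteq> 0" using bd by auto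
  have z: "(0::real) ^ (2*n-2) = 0" "(0::real) ^ (2*n) = 0" "(0::real) ^ n = 0" using n by (simp_all add: zero_power)
  have "QQ n a b d C H 0 = - d * b" unfolding QQ_def z by simp
  then have "L \<noteq> 0" using Q0 db by auto
  then have Lp: "L > 0" using L0 by simp
  have FL: "FF n a b d C H L = 0" using QQ_eq[OF n Lp] Q0 Lp by simp
  have "((\<lambda>x. FF n a b d C H (g x)) \<longlongrightarrow> FF n a b d C H L) at_top"
    by (rule isCont_tendsto_compose[OF FF_cont[OF n Lp] lim])
  then have "((\<lambda>x. (g' x)^2) \<longlongrightarrow> 0) at_top" using FL sd(4) by simp
  then have "((\<lambda>x. sqrt ((g' x)^2)) \<longlongrightarrow> sqrt 0) at_top" by (rule tendsto_real_sqrt)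
  then have "((\<lambda>x. \<bar>g' x\<bar>) \<longlongrightarrow> 0) at_top" by simp
  then have dlim: "(g' \<longlongrightarrow> 0) at_top" by (rule tendsto_rabs_zero_cancel)
  have d1: "((\<lambda>x. g' (x+1)) \<longlongrightarrow> 0) at_top" by (rule filterlim_compose[OF dlim top1])
  have "((\<lambda>x. g' (x+1) - g' x) \<longlongrightarrow> 0 - 0) at_top" by (intro tendsto_intros d1 dlim)
  then have A: "((\<lambda>x. FP n a b d C H (g (\<eta> x)) / 2) \<longlongrightarrow> 0) at_top" using eta by simp
  have B: "((\<lambda>x. FP n a b d C H (g (\<eta> x)) / 2) \<longlongrightarrow> FP n a b d C H L / 2) at_top"
    by (intro tendsto_intros isCont_tendsto_compose[OF FP_cont[OF Lp] geta]) auto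
  have "FP n a b d C H L / 2 = 0"
    using tendsto_unique[OF trivial_limit_at_top_linorder B A] .
  then show ?thesis using Lp FL by simp
qed

lemma quad3:
  fixes A B c p1 p2 p3 :: real
  assumes "A*p1^2 + B*p1 + c = 0" "A*p2^2 + B*p2 + c = 0" "A*p3^2 + B*p3 + c = 0"
    "p1 \<noteq> p2" "p1 \<noteq> p3" "p2 \<noteq> p3"
  shows "c = 0"
proof -
  have "(p1 - p2) * (A*(p1+p2) + B) = 0" using assms(1,2) by (simp add: algebra_simps power2_eq_square) 
  then have h1: "A*(p1+p2) + B = 0" using assms(4) by simp
  have "(p1 - p3) * (A*(p1+p3) + B) = 0" using assms(1,3) by (simp add: algebra_simps power2_eq_square)
  then have h2: "A*(p1+p3) + B = 0" using assms(5) by simp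
  have "A * (p2 - p3) = (A*(p1+p2) + B) - (A*(p1+p3) + B)" by (simp add: algebra_simps)
  then have "A * (p2 - p3) = 0" using h1 h2 by simp
  then have "A = 0" using assms(6) by simp
  then show ?thesis using h1 assms(1) by simp
qed

lemma FP_poly: assumes "n \<ge> 2" "x > 0"
  shows "x ^ (2*n-1) * FP n a b d C H x = -2*d*(a+b*H^2) * (x^n)^2 + 2*d*b*H*(real n - 2) * x^n + d*b*(2*real n - 2)"
proof -
  have i: "(2*n-1) - (n-1) = n" using assms(1) by simp
  have "x ^ (2*n-1) * ip (n-1) x = x ^ ((2*n-1)-(n-1))" by (rule pow_ip) (use assms in auto)
  then have e1: "x ^ (2*n-1) * ip (n-1) x = x ^ n" by (simp only: i)
  have e2: "x ^ (2*n-1) * ip (2*n-1) x = 1" using pow_ip[OF assms(2), of "2*n-1" "2*n-1"] by simp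
  have j: "2*n = (2*n-1)+1" using assms(1) by simp
  have e3: "x ^ (2*n-1) * x = (x ^ n) ^ 2"
    by (simp only: power_mult[symmetric] mult.commute[of n 2] power_Suc2[symmetric]) (use j in simp)
  have "x ^ (2*n-1) * FP n a b d C H x = -2*d*(a+b*H^2) * (x ^ (2*n-1) * x) + 2*d*b*H*(real n - 2) * (x ^ (2*n-1) * ip (n-1) x) + d*b*(2*real n - 2) * (x ^ (2*n-1) * ip (2*n-1) x)"
    unfolding FP_def by (simp only: algebra_simps)
  then show ?thesis unfolding e1 e2 e3 by simp
qed

lemma FP_three:
  assumes n: "n \<ge> 2" and bd: "b \<in> {-1,1}" "d \<in> {-1,1}"
    and u: "0 < u1" "u1 < u2" "u2 < u3"
    and z: "FP n a b d C H u1 = 0" "FP n a b d C H u2 = 0" "FP n a b d C H u3 = 0"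
  shows False
proof -
  define A where "A = -2*d*(a+b*H^2)"
  define B where "B = 2*d*b*H*(real n - 2)"
  define c where "c = d*b*(2*real n - 2)"
  have q: "A * (x^n)^2 + B * x^n + c = 0" if "x > 0" "FP n a b d C H x = 0" for x
    using FP_poly[OF n that(1), of a b d C H] that(2) unfolding A_def B_def c_def by simp
  have np: "n > 0" using n by simp
  have m: "u1^n < u2^n" "u2^n < u3^n" using u np by (auto intro: power_strict_mono)
  have "c = 0"
    by (rule quad3[OF q[OF _ z(1)] q[OF _ z(2)] q[OF _ z(3)]]) (use u m in auto)
  moreover have "c \<noteq> 0" unfolding c_def using bd n by auto
  ultimately show False by simp
qed

lemma inc_lim_top:
  fixes g :: "real \<Rightarrow> real"
  assumes m: "mono g" and bd: "bdd_above (range g)"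
  shows "(g \<longlongrightarrow> Sup (range g)) at_top"
proof (rule order_tendstoI)
  fix a assume "a < Sup (range g)"
  then obtain x0 where "a < g x0" using less_cSup_iff[of "range g" a] bd by auto
  then show "eventually (\<lambda>x. a < g x) at_top"
    unfolding eventually_at_top_linorder using m by (metis less_le_trans monoD)
next
  fix a assume "Sup (range g) < a"
  moreover have "g x \<le> Sup (range g)" for x using bd by (simp add: cSup_upper)
  ultimately have "\<forall>x. g x < a" by (auto intro: le_less_trans)
  then show "eventually (\<lambda>x. g x < a) at_top" by (rule always_eventually)
qed

lemma inc_lim_bot:
  fixes g :: "real \<Rightarrow> real"
  assumes m: "mono g" and bd: "bdd_below (range g)"
  shows "(g \<longlongrightarrow> Inf (range g)) at_bot"
proof (rule order_tendstoI)
  fix a assume "Inf (range g) > a"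
  moreover have "g x \<ge> Inf (range g)" for x using bd by (simp add: cInf_lower)
  ultimately have "\<forall>x. a < g x" by (auto intro: less_le_trans)
  then show "eventually (\<lambda>x. a < g x) at_bot" by (rule always_eventually)
next
  fix a assume "Inf (range g) < a"
  then obtain x0 where "g x0 < a" using cInf_less_iff[of "range g" a] bd by auto
  then show "eventually (\<lambda>x. g x < a) at_bot"
    unfolding eventually_at_bot_linorder using m by (metis le_less_trans monoD)
qed

lemma caseA:
  assumes n: "n \<ge> 2" and bd: "b \<in> {-1,1}" "d \<in> {-1,1}"
    and s: "sol n a b d C H g g' g''" and pos: "\<And>x. g' x > 0"
  shows "type2 g"
proof -
  note sd = solD[OF s]
  have sm: "g s < g t" if "s < t" for s t
    using DERIV_pos_imp_increasing[OF that, of g] sd(2) pos by blast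
  then have smono: "strict_mono g" by (simp add: strict_monoI)
  then have mono: "mono g" by (simp add: strict_mono_mono)
  have bb: "bdd_below (range g)" using sd(1) by (auto intro!: bdd_belowI[of _ 0] less_imp_le)
  define \<alpha> where "\<alpha> = Inf (range g)"
  have lb: "(g \<longlongrightarrow> \<alpha>) at_bot" unfolding \<alpha>_def by (rule inc_lim_bot[OF mono bb])
  have "((\<lambda>x. g (- x)) \<longlongrightarrow> \<alpha>) at_top" using lb[unfolded filterlim_at_bot_mirror] .
  then have "((\<lambda>x. g (0 - x)) \<longlongrightarrow> \<alpha>) at_top" by simp
  then have A: "\<alpha> > 0 \<and> FF n a b d C H \<alpha> = 0 \<and> FP n a b d C H \<alpha> = 0"
    by (rule lim_top[OF n bd sol_reflect[OF s]])
  have al: "\<alpha> \<le> g x" for x unfolding \<alpha>_def using bb by (simp add: cInf_lower)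
  have nba: "\<not> bdd_above (range g)"
  proof
    assume ba: "bdd_above (range g)"
    define \<beta> where "\<beta> = Sup (range g)"
    have "(g \<longlongrightarrow> \<beta>) at_top" unfolding \<beta>_def by (rule inc_lim_top[OF mono ba])
    then have B: "\<beta> > 0 \<and> FF n a b d C H \<beta> = 0 \<and> FP n a b d C H \<beta> = 0"
      by (rule lim_top[OF n bd s])
    have "g 1 \<le> \<beta>" unfolding \<beta>_def using ba by (simp add: cSup_upper)
    moreover have "\<alpha> \<le> g 0" by (rule al)
    moreover have "g 0 < g 1" by (rule sm) simp
    ultimately have ab: "\<alpha> < \<beta>" by simp
    have "\<exists>z. \<alpha> < z \<and> z < \<beta> \<and> DERIV (FF n a b d C H) z :> 0"
    proof (rule Rolle[OF ab])
      show "FF n a b d C H \<alpha> = FF n a b d C H \<beta>" using A B by simp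
      show "continuous_on {\<alpha>..\<beta>} (FF n a b d C H)"
        using A by (intro continuous_at_imp_continuous_on ballI FF_cont[OF n]) auto
      fix x assume "\<alpha> < x" "x < \<beta>"
      then show "FF n a b d C H differentiable (at x)"
        using FF_deriv[OF n, of x] A real_differentiable_def by force
    qed
    then obtain z where z: "\<alpha> < z" "z < \<beta>" "DERIV (FF n a b d C H) z :> 0" by blast
    have "FP n a b d C H z = 0"
      using DERIV_unique[OF FF_deriv[OF n, of z] z(3)] A z by simp
    then show False using FP_three[OF n bd, of \<alpha> z \<beta>] A B z by auto
  qed
  have "range g = {\<alpha><..}"
  proof
    show "range g \<subseteq> {\<alpha><..}"
    proof
      fix y assume "y \<in> range g"
      then obtain x where "y = g x" by auto
      then show "y \<in> {\<alpha><..}" using al[of "x-1"] sm[of "x-1" x] by simp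
    qed
    show "{\<alpha><..} \<subseteq> range g"
    proof
      fix y assume "y \<in> {\<alpha><..}"
      then have y: "\<alpha> < y" by simp
      obtain x1 where x1: "g x1 < y" using cInf_less_iff[of "range g" y] bb y unfolding \<alpha>_def by auto
      obtain x2 where x2: "g x2 > y" using nba unfolding bdd_above_def by (auto simp: not_le)
      have "x1 \<le> x2" using x1 x2 mono by (metis le_less_trans less_asym monoD nle_le)
      then obtain x where "g x = y"
        using IVT[of g x1 y x2] x1 x2 DERIV_isCont[OF sd(2)] by force
      then show "y \<in> range g" by (metis rangeI)
    qed
  qed
  then show ?thesis unfolding type2_def using A smono strict_mono_imp_inj_on by blast
qed

lemma periodic_type1:
  fixes g :: "real \<Rightarrow> real"
  assumes cont: "continuous_on UNIV g" and T: "T > 0" and per: "\<And>x. g (x + T) = g x"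
    and pos: "\<And>x. g x > 0" and nc: "\<not> (\<exists>c. \<forall>x. g x = c)"
  shows "type1 g"
proof -
  have pn: "g (x + real k * T) = g x" for k :: nat and x
  proof (induction k)
    case (Suc k)
    have "g (x + real (Suc k) * T) = g ((x + real k * T) + T)" by (simp add: algebra_simps)
    then show ?case using per Suc by simp
  qed simp
  have pz: "g (x + real_of_int k * T) = g x" for k :: int and x
  proof (cases "k \<ge> 0")
    case True
    then obtain m where "k = int m" using nonneg_int_cases by blast
    then show ?thesis using pn by simp
  next
    case False
    then obtain m where m: "k = - int m" by (metis le_cases neg_int_cases less_le_not_le nonneg_int_cases)
    have "g x = g ((x - real m * T) + real m * T)" by simp
    also have "\<dots> = g (x - real m * T)" by (rule pn)
    finally show ?thesis using m by simp
  qed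
  have red: "\<exists>y\<in>{0..T}. g x = g y" for x
  proof -
    define k where "k = \<lfloor>x / T\<rfloor>"
    have k1: "real_of_int k \<le> x / T" unfolding k_def by simp
    have k2: "x / T < real_of_int k + 1" unfolding k_def by linarith
    have a1: "real_of_int k * T \<le> x" using k1 T by (simp add: field_simps)
    have a2: "x < (real_of_int k + 1) * T" using k2 T by (simp add: field_simps)
    define y where "y = x - real_of_int k * T"
    have "y \<in> {0..T}" using a1 a2 unfolding y_def by (auto simp: algebra_simps)
    moreover have "g x = g y" using pz[of y k] unfolding y_def by simp
    ultimately show ?thesis by blast
  qed
  have c0: "continuous_on {0..T} g" using cont by (rule continuous_on_subset) simp
  obtain p where p: "p \<in> {0..T}" "\<And>y. y \<in> {0..T} \<Longrightarrow> g p \<le> g y"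
    using continuous_attains_inf[OF compact_Icc _ c0] T by auto
  obtain q where q: "q \<in> {0..T}" "\<And>y. y \<in> {0..T} \<Longrightarrow> g y \<le> g q"
    using continuous_attains_sup[OF compact_Icc _ c0] T by auto
  have lo: "g p \<le> g x" "g x \<le> g q" for x using red[of x] p q by auto
  have ic: "isCont g x" for x using cont by (simp add: continuous_on_eq_continuous_at)
  have rng: "range g = {g p..g q}"
  proof
    show "range g \<subseteq> {g p..g q}" using lo by auto
    show "{g p..g q} \<subseteq> range g"
    proof
      fix y assume y: "y \<in> {g p..g q}"
      have "\<exists>x. g x = y"
      proof (cases "p \<le> q")
        case True
        then show ?thesis using IVT[of g p y q] y ic by auto
      next
        case False
        then show ?thesis using IVT2[of g p y q] y ic by auto
      qed
      then show "y \<in> range g" by auto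
    qed
  qed
  have lt: "g p < g q"
  proof (rule ccontr)
    assume "\<not> g p < g q"
    then have "\<forall>x. g x = g p" using lo by (metis antisym not_le order_trans)
    then show False using nc by blast
  qed
  have inf: "infinite (g -` {g p})"
  proof -
    have "inj (\<lambda>k::nat. p + real k * T)" using T by (auto simp: inj_def)
    then have "infinite (range (\<lambda>k::nat. p + real k * T))" by (rule range_inj_infinite)
    moreover have "range (\<lambda>k::nat. p + real k * T) \<subseteq> g -` {g p}" using pn by auto
    ultimately show ?thesis using infinite_super by blast
  qed
  have inf2: "infinite (g -` {g q})"
  proof -
    have "inj (\<lambda>k::nat. q + real k * T)" using T by (auto simp: inj_def)
    then have "infinite (range (\<lambda>k::nat. q + real k * T))" by (rule range_inj_infinite)
    moreover have "range (\<lambda>k::nat. q + real k * T) \<subseteq> g -` {g q}" using pn by auto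
    ultimately show ?thesis using infinite_super by blast
  qed
  show ?thesis unfolding type1_def
    using T per pos[of p] lt rng inf inf2 by blast
qed

lemma sym_inc:
  fixes g :: "real \<Rightarrow> real"
  assumes cont: "continuous_on UNIV g" and sym: "\<And>x. g (2*m - x) = g x"
    and incH: "\<forall>s t. m \<le> s \<longrightarrow> s < t \<longrightarrow> g s < g t"
  shows "g -` {g m} = {m}" "\<forall>y\<in>range g - {g m}. card (g -` {y}) = 2"
    "\<not> (\<exists>T>0. \<forall>x. g (x + T) = g x)"
    "bdd_above (range g) \<longrightarrow> range g = {g m..<Sup (range g)}"
    "\<not> bdd_above (range g) \<longrightarrow> range g = {g m..}"
proof -
  have inc: "g s < g t" if "m \<le> s" "s < t" for s t using incH that by blast
  define r where "r x = m + \<bar>x - m\<bar>" for x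
  have gr: "g (r x) = g x" for x
  proof (cases "m \<le> x")
    case True then show ?thesis by (simp add: r_def)
  next
    case False
    then have "r x = 2*m - x" by (simp add: r_def)
    then show ?thesis using sym by simp
  qed
  have r0: "r x \<ge> m" for x by (simp add: r_def)
  have rx: "r x = m \<longleftrightarrow> x = m" for x by (auto simp: r_def)
  have injr: "s = t" if "m \<le> s" "m \<le> t" "g s = g t" for s t
    using inc[of s t] inc[of t s] that by (cases s t rule: linorder_cases) auto
  have ge: "g m \<le> g x" for x
    using inc[of m "r x"] gr[of x] r0[of x] by (cases "r x = m") (auto simp: less_le)
  have eq0: "g x = g m \<longleftrightarrow> x = m" for x
    using injr[of "r x" m] gr[of x] r0[of x] rx[of x] by auto
  show P1: "g -` {g m} = {m}" using eq0 by auto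
  show "\<forall>y\<in>range g - {g m}. card (g -` {y}) = 2"
  proof
    fix y assume "y \<in> range g - {g m}"
    then obtain x where x: "y = g x" "x \<noteq> m" by (auto simp: eq0)
    define t where "t = r x"
    have t: "t > m" using r0[of x] rx[of x] x(2) unfolding t_def by (simp add: less_le)
    have gt: "g t = y" using gr x unfolding t_def by simp
    have "g -` {y} = {t, 2*m - t}"
    proof
      show "g -` {y} \<subseteq> {t, 2*m - t}"
      proof
        fix s assume "s \<in> g -` {y}"
        then have "g (r s) = g t" using gr gt by simp
        then have "r s = t" using injr[of "r s" t] r0 t by simp
        then show "s \<in> {t, 2*m - t}" unfolding r_def by (cases "m \<le> s") auto
      qed
      show "{t, 2*m - t} \<subseteq> g -` {y}" using gt sym[of t] by auto
    qed
    moreover have "t \<noteq> 2*m - t" using t by simp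
    ultimately show "card (g -` {y}) = 2" by simp
  qed
  show "\<not> (\<exists>T>0. \<forall>x. g (x + T) = g x)"
  proof
    assume "\<exists>T>0. \<forall>x. g (x + T) = g x"
    then obtain T where "T > 0" "g (m + T) = g m" by blast
    then show False using eq0[of "m + T"] by simp
  qed
  have ic: "isCont g x" for x using cont by (simp add: continuous_on_eq_continuous_at)
  have reach: "y \<in> range g" if y: "g m \<le> y" "y < g x" for y x
  proof -
    have "g m \<le> y" "y \<le> g (r x)" "m \<le> r x" using y gr r0 by auto
    then obtain z where "g z = y" using IVT[of g m y "r x"] ic by auto
    then show ?thesis by auto
  qed
  show "bdd_above (range g) \<longrightarrow> range g = {g m..<Sup (range g)}"
  proof
    assume ba: "bdd_above (range g)"
    show "range g = {g m..<Sup (range g)}"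
  proof
    show "range g \<subseteq> {g m..<Sup (range g)}"
    proof
      fix y assume "y \<in> range g"
      then obtain x where x: "y = g x" by auto
      have "g x = g (r x)" using gr by simp
      also have "\<dots> < g (r x + 1)" using inc r0 by simp
      also have "\<dots> \<le> Sup (range g)" using ba by (simp add: cSup_upper)
      finally show "y \<in> {g m..<Sup (range g)}" using x ge by simp
    qed
    show "{g m..<Sup (range g)} \<subseteq> range g"
    proof
      fix y assume "y \<in> {g m..<Sup (range g)}"
      then have y: "g m \<le> y" "y < Sup (range g)" by auto
      then obtain x where "y < g x" using less_cSup_iff[of "range g" y] ba by auto
      then show "y \<in> range g" using reach y by blast
    qed
  qed
  qed
  show "\<not> bdd_above (range g) \<longrightarrow> range g = {g m..}"
  proof
    assume nba: "\<not> bdd_above (range g)"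
    show "range g = {g m..}"
  proof
    show "range g \<subseteq> {g m..}" using ge by auto
    show "{g m..} \<subseteq> range g"
    proof
      fix y assume "y \<in> {g m..}"
      moreover obtain x where "y < g x" using nba unfolding bdd_above_def by (auto simp: not_le)
      ultimately show "y \<in> range g" using reach by auto
    qed
  qed
  qed
qed

lemma sym_min_type:
  fixes g :: "real \<Rightarrow> real"
  assumes cont: "continuous_on UNIV g" and sym: "\<And>x. g (2*m - x) = g x"
    and inc: "\<And>s t. m \<le> s \<Longrightarrow> s < t \<Longrightarrow> g s < g t"
  shows "type3 g \<or> type4 g"
proof -
  have incH: "\<forall>s t. m \<le> s \<longrightarrow> s < t \<longrightarrow> g s < g t" using inc by blast
  note S = sym_inc[where g=g and m=m, OF cont sym incH]
  have c1: "card (g -` {g m}) = 1" using S(1) by simp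
  show ?thesis
  proof (cases "bdd_above (range g)")
    case True
    have "range g = {g m..<Sup (range g)}" by (rule mp[OF S(4) True])
    then have "type4 g" unfolding type4_def using S(2,3) c1
      by (intro conjI exI[of _ "g m"] exI[of _ "Sup (range g)"]) auto
    then show ?thesis by simp
  next
    case False
    have "range g = {g m..}" by (rule mp[OF S(5) False])
    then have "type3 g" unfolding type3_def using S(2) c1 by (intro exI[of _ "g m"]) auto
    then show ?thesis by simp
  qed
qed

lemma sym_max_type:
  fixes g :: "real \<Rightarrow> real"
  assumes cont: "continuous_on UNIV g" and sym: "\<And>x. g (2*m - x) = g x"
    and dec: "\<And>s t. m \<le> s \<Longrightarrow> s < t \<Longrightarrow> g t < g s" and pos: "\<And>x. g x > 0"
  shows "type5 g"
proof -
  define h where "h x = - g x" for x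
  have conth: "continuous_on UNIV h" unfolding h_def by (intro continuous_intros cont)
  have symh: "h (2*m - x) = h x" for x unfolding h_def using sym by simp
  have inch: "h s < h t" if "m \<le> s" "s < t" for s t unfolding h_def using dec[OF that] by simp
  have incH: "\<forall>s t. m \<le> s \<longrightarrow> s < t \<longrightarrow> h s < h t" using inch by blast
  note S = sym_inc[where g=h and m=m, OF conth symh incH]
  have ba: "bdd_above (range h)" unfolding h_def using pos by (auto intro!: bdd_aboveI[of _ 0] less_imp_le)
  define S0 where "S0 = Sup (range h)"
  have rh: "range h = {h m..<S0}" using S(4) ba unfolding S0_def by blast
  have pre: "h -` {- y} = g -` {y}" for y unfolding h_def by auto
  have mem: "y \<in> range g \<longleftrightarrow> - y \<in> range h" for y
    unfolding h_def by (auto simp: image_iff)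
  have rg: "range g = {- S0<..g m}"
  proof (rule set_eqI)
    fix y show "y \<in> range g \<longleftrightarrow> y \<in> {- S0<..g m}"
      using mem[of y] rh by (auto simp: h_def)
  qed
  have c1: "card (g -` {g m}) = 1" using S(1) pre[of "g m"] unfolding h_def by simp
  have c2: "\<forall>y\<in>range g - {g m}. card (g -` {y}) = 2"
  proof
    fix y assume "y \<in> range g - {g m}"
    then have "- y \<in> range h - {h m}" using mem unfolding h_def by auto
    then have "card (h -` {- y}) = 2" using S(2) by blast
    then show "card (g -` {y}) = 2" using pre by simp
  qed
  have np: "\<not> (\<exists>T>0. \<forall>x. g (x + T) = g x)" using S(3) unfolding h_def by simp
  show ?thesis unfolding type5_def using np rg c1 c2 by blast
qed

lemma sign_const:
  fixes f :: "real \<Rightarrow> real"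
  assumes c: "\<And>x. isCont f x" and nz: "\<And>x. a < x \<Longrightarrow> f x \<noteq> 0" and p: "a < p" "f p > 0"
  shows "\<And>x. a < x \<Longrightarrow> f x > 0"
proof -
  fix x assume x: "a < x"
  show "f x > 0"
  proof (rule ccontr)
    assume "\<not> f x > 0"
    then have fx: "f x \<le> 0" by simp
    show False
    proof (cases "x \<le> p")
      case True
      then obtain z where "x \<le> z" "z \<le> p" "f z = 0" using IVT[of f x 0 p] fx p c by auto
      then show False using nz[of z] x by simp
    next
      case False
      then obtain z where "p \<le> z" "z \<le> x" "f z = 0" using IVT2[of f x 0 p] fx p c by auto
      then show False using nz[of z] p by simp
    qed
  qed
qed

lemma sign_const_all:
  fixes f :: "real \<Rightarrow> real"
  assumes c: "\<And>x. isCont f x" and nz: "\<And>x. f x \<noteq> 0" and p: "f p > 0"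
  shows "f x > 0"
proof (rule ccontr)
  assume "\<not> f x > 0"
  then have fx: "f x \<le> 0" by simp
  show False
  proof (cases "x \<le> p")
    case True
    then obtain z where "f z = 0" using IVT[of f x 0 p] fx p c by auto
    then show False using nz by simp
  next
    case False
    then obtain z where "f z = 0" using IVT2[of f x 0 p] fx p c by auto
    then show False using nz by simp
  qed
qed

theorem mainTheorem8:
  fixes n :: nat and a b d C H :: real and g g' g'' :: "real \<Rightarrow> real"
  assumes "n \<ge> 2"
    and "a \<in> {-1, 0, 1}" and "b \<in> {-1, 1}" and "d \<in> {-1, 1}"
    and "\<forall>x. g x > 0"
    and "\<not> (\<exists>c. \<forall>x. g x = c)"
    and "smooth_fun g"
    and "\<forall>x. (g has_real_derivative g' x) (at x)"
    and "\<forall>x. (g' has_real_derivative g'' x) (at x)"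
    and "\<forall>x. (g' x)^2 = fpot n a b d C H (g x)"
    and "\<forall>x. (fpot n a b d C H has_real_derivative (2 * g'' x)) (at (g x))"
  shows "type1 g \<or> type2 g \<or> type3 g \<or> type4 g \<or> type5 g"
proof -
  note n = assms(1) and bd = assms(3,4) and nc = assms(6)
  have gpos: "\<And>x. g x > 0" using assms(5) by blast
  have dg: "\<And>x. (g has_real_derivative g' x) (at x)" using assms(8) by blast
  have dg': "\<And>x. (g' has_real_derivative g'' x) (at x)" using assms(9) by blast
  have g2: "g'' x = FP n a b d C H (g x) / 2" for x
  proof -
    have "2 * g'' x = FP n a b d C H (g x)"
      using DERIV_unique[OF assms(11)[rule_format, of x] fpot_deriv[OF n gpos[of x]]] .
    then show ?thesis by simp
  qed
  have en: "(g' x)^2 = FF n a b d C H (g x)" for x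
    using assms(10) fpot_eq[OF n gpos[of x]] by simp
  have s: "sol n a b d C H g g' g''" unfolding sol_def using gpos dg dg' en g2 by blast
  have cont: "continuous_on UNIV g" using dg by (auto intro!: continuous_at_imp_continuous_on DERIV_isCont)
  have icg: "isCont g x" for x using dg by (rule DERIV_isCont)
  have icg': "isCont g' x" for x using dg' by (rule DERIV_isCont)
  consider (none) "\<forall>x. g' x \<noteq> 0" | (two) x0 x1 where "x0 < x1" "g' x0 = 0" "g' x1 = 0"
    | (one) x0 where "g' x0 = 0" "\<And>x. g' x = 0 \<Longrightarrow> x = x0"
    by (metis linorder_neqE_linordered_idom)
  then show ?thesis
  proof cases
    case none
    show ?thesis
    proof (cases "g' 0 > 0")
      case True
      have "g' x > 0" for x by (rule sign_const_all[of g' 0 x]) (use icg' none True in auto)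
      then show ?thesis using caseA[OF n bd s] by blast
    next
      case False
      then have f0: "g' 0 < 0" using none by (metis linorder_neqE_linordered_idom)
      define h where "h x = g (0 - x)" for x
      have sh: "sol n a b d C H h (\<lambda>x. - g' (0 - x)) (\<lambda>x. g'' (0 - x))"
        unfolding h_def by (rule sol_reflect[OF s])
      have "- g' x > 0" for x
        by (rule sign_const_all[of "\<lambda>x. - g' x" 0 x]) (use icg' none f0 in \<open>auto intro: continuous_intros\<close>)
      then have "- g' (0 - x) > 0" for x by blast
      then have "type2 h" using caseA[OF n bd sh] by blast
      moreover have "range h = range g"
      proof (rule set_eqI)
        fix y show "y \<in> range h \<longleftrightarrow> y \<in> range g"
          unfolding h_def by (auto simp: image_iff) (metis diff_0 minus_minus)
      qed
      moreover have "inj g" if "inj h"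
      proof (rule injI)
        fix x y assume "g x = g y"
        then have "h (0 - x) = h (0 - y)" unfolding h_def by simp
        then show "x = y" using that by (simp add: inj_eq)
      qed
      ultimately have "type2 g" unfolding type2_def by auto
      then show ?thesis by blast
    qed
  next
    case two
    define T where "T = 2 * (x1 - x0)"
    have T: "T > 0" using two unfolding T_def by simp
    have per: "g (x + T) = g x" for x
    proof -
      have "g (2*x1 - (2*x0 - x)) = g (2*x0 - x)" by (rule reflect_sym[OF s two(3)])
      also have "\<dots> = g x" by (rule reflect_sym[OF s two(2)])
      finally show ?thesis unfolding T_def by (simp add: algebra_simps)
    qed
    have "type1 g" by (rule periodic_type1[OF cont T per gpos nc])
    then show ?thesis by blast
  next
    case one
    have sym: "g (2*x0 - x) = g x" for x by (rule reflect_sym[OF s one(1)])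
    have nz: "g' x \<noteq> 0" if "x0 < x" for x using one(2)[of x] that by auto
    show ?thesis
    proof (cases "g' (x0 + 1) > 0")
      case True
      have pos: "g' x > 0" if "x0 < x" for x
        by (rule sign_const[of g' x0 "x0 + 1" x]) (use icg' nz True that in auto)
      have inc: "g s < g t" if "x0 \<le> s" "s < t" for s t
      proof (rule DERIV_pos_imp_increasing_open[OF that(2)])
        fix x assume "s < x" "x < t"
        then show "\<exists>y. DERIV g x :> y \<and> y > 0" using dg pos that by force
      next
        show "continuous_on {s..t} g" using cont by (rule continuous_on_subset) simp
      qed
      have "type3 g \<or> type4 g" by (rule sym_min_type[OF cont sym inc])
      then show ?thesis by blast
    next
      case False
      then have fneg: "g' (x0 + 1) < 0" using nz[of "x0+1"] by simp
      have neg: "- g' x > 0" if "x0 < x" for x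
        by (rule sign_const[of "\<lambda>x. - g' x" x0 "x0 + 1" x]) (use icg' nz fneg that in \<open>auto intro: continuous_intros\<close>)
      have dec: "g t < g s" if "x0 \<le> s" "s < t" for s t
      proof (rule DERIV_neg_imp_decreasing_open[OF that(2)])
        fix x assume "s < x" "x < t"
        then show "\<exists>y. DERIV g x :> y \<and> y < 0" using dg neg that by force
      next
        show "continuous_on {s..t} g" using cont by (rule continuous_on_subset) simp
      qed
      have "type5 g" by (rule sym_max_type[OF cont sym dec gpos])
      then show ?thesis by blast
    qed
  qed
qed

end
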